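(* Let $\mathcal{U}$ be a measure space with measure $\mu$, $0<\mu(\mathcal{U})<\infty$, and equip $\mathcal{U}^n$ with the product measure. For $i\in[n]$ let $\mathcal{X}_i$ be a family of measurable subsets of $\mathcal{U}$ and let $Q_i\subseteq\mathcal{U}$ be a set of $m$ points with $\mathbf{D}(Q_i,\mathcal{X}_i)\le\varepsilon_i$; let $\sigma_i:[m]\to Q_i$ be injective. Let $P_R\subseteq[m]^n$ be a finite point collection (multiset) with discrepancy at most $\varepsilon_R$ against combinatorial rectangles, i.e. $\left|\frac{|P_R\cap(I_1\times\cdots\times I_n)|}{|P_R|}-\prod_{j=1}^n\frac{|I_j|}{m}\right|\le\varepsilon_R$ for all $I_1,\dots,I_n\subseteq[m]$. Define $\sigma(a_1,\dots,a_n)=(\sigma_1(a_1),\dots,\sigma_n(a_n))$ and the multiset $Q_{[n]}=\{\sigma(p):p\in P_R\}\subseteq\mathcal{U}^n$. Then \[ \mathbf{D}(Q_{[n]},\mathcal{X}_{[n]})\le\varepsilon_R+\sum_{i=1}^n\varepsilon_i, \] where $\mathcal{X}_{[n]}=\{X_1\times\cdots\times X_n: X_i\in\mathcal{X}_i\}$.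
   Context: $[r]=\{1,\dots,r\}$. Discrepancy: $\mathbf{D}(P,\mathcal{X})=\sup_{X\in\mathcal{X}}\left|\frac{|P\cap X|}{|P|}-\frac{\mu(X)}{\mu(\mathcal{U})}\right|$, with points counted with multiplicity. A combinatorial rectangle in $[m]^n$ is a set $I_1\times\cdots\times I_n$ with each $I_j\subseteq[m]$. *)

theory Defs
  imports "HOL-Analysis.Analysis" "HOL-Library.Multiset"
begin

definition count_in :: "'b multiset \<Rightarrow> 'b set \<Rightarrow> nat" where
  "count_in P X = size (filter_mset (\<lambda>x. x \<in> X) P)"

text \<open>Discrepancy D(P, Xs) w.r.t. measure N on universe space N:
  sup over X in Xs of | |P cap X|/|P| - mu(X)/mu(U) |, taken in ereal
  (so the sup over an empty family is -infinity).\<close>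
definition discrepancy :: "'b multiset \<Rightarrow> 'b set set \<Rightarrow> 'b measure \<Rightarrow> ereal" where
  "discrepancy P Xs N =
     (SUP X\<in>Xs. ereal \<bar>real (count_in P X) / real (size P)
                        - measure N X / measure N (space N)\<bar>)"

end

theory Submission
  imports Defs
begin

lemma prod_diff_le:
  fixes a b :: "nat \<Rightarrow> real"
  assumes "finite S" "\<forall>j\<in>S. 0 \<le> a j \<and> a j \<le> 1 \<and> 0 \<le> b j \<and> b j \<le> 1"
  shows "\<bar>(\<Prod>j\<in>S. b j) - (\<Prod>j\<in>S. a j)\<bar> \<le> (\<Sum>j\<in>S. \<bar>b j - a j\<bar>)"
  using assms
proof (induction S rule: finite_induct)
  case empty then show ?case by simp
next
  case (insert x S)
  have pa: "0 \<le> (\<Prod>j\<in>S. a j)" "(\<Prod>j\<in>S. a j) \<le> 1"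
    using insert by (auto intro: prod_nonneg prod_le_1)
  have bx: "0 \<le> b x" "b x \<le> 1" using insert by auto
  have IH: "\<bar>(\<Prod>j\<in>S. b j) - (\<Prod>j\<in>S. a j)\<bar> \<le> (\<Sum>j\<in>S. \<bar>b j - a j\<bar>)"
    using insert by auto
  have eq: "(\<Prod>j\<in>insert x S. b j) - (\<Prod>j\<in>insert x S. a j)
      = b x * ((\<Prod>j\<in>S. b j) - (\<Prod>j\<in>S. a j)) + (b x - a x) * (\<Prod>j\<in>S. a j)"
    using insert by (simp add: algebra_simps)
  have "\<bar>b x * ((\<Prod>j\<in>S. b j) - (\<Prod>j\<in>S. a j))\<bar> \<le> \<bar>(\<Prod>j\<in>S. b j) - (\<Prod>j\<in>S. a j)\<bar>"
    using bx by (simp add: abs_mult mult_left_le_one_le)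
  moreover have "\<bar>(b x - a x) * (\<Prod>j\<in>S. a j)\<bar> \<le> \<bar>b x - a x\<bar>"
    using pa by (simp add: abs_mult mult_left_le)
  ultimately show ?case using IH eq by (simp only: sum.insert[OF insert(1,2)])
qed

lemma measure_PiM_box:
  assumes "finite_measure M" "finite I" "\<And>i. i \<in> I \<Longrightarrow> A i \<in> sets M"
  shows "measure (PiM I (\<lambda>_. M)) (PiE I A) = (\<Prod>i\<in>I. measure M (A i))"
proof -
  interpret finite_measure M by fact
  interpret product_sigma_finite "\<lambda>_. M" by standard
  have "emeasure (PiM I (\<lambda>_. M)) (PiE I A) = (\<Prod>i\<in>I. emeasure M (A i))"
    using assms by (intro emeasure_PiM) auto
  also have "\<dots> = ennreal (\<Prod>i\<in>I. measure M (A i))"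
    by (simp add: emeasure_eq_measure prod_ennreal)
  finally show ?thesis by (simp add: measure_def prod_nonneg)
qed

theorem mainTheorem11:
  fixes M :: "'a measure" and n m :: nat
    and Xs :: "nat \<Rightarrow> 'a set set" and Q :: "nat \<Rightarrow> 'a set"
    and eps :: "nat \<Rightarrow> real" and epsR :: real
    and \<sigma> :: "nat \<Rightarrow> nat \<Rightarrow> 'a"
    and PR :: "(nat \<Rightarrow> nat) multiset"
  assumes pos: "0 < emeasure M (space M)"
    and fin: "emeasure M (space M) < \<infinity>"
    and Xs_meas: "\<And>i. i \<in> {1..n} \<Longrightarrow> Xs i \<subseteq> sets M"
    and Q_sub: "\<And>i. i \<in> {1..n} \<Longrightarrow> Q i \<subseteq> space M"
    and Q_fin: "\<And>i. i \<in> {1..n} \<Longrightarrow> finite (Q i)"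
    and Q_card: "\<And>i. i \<in> {1..n} \<Longrightarrow> card (Q i) = m"
    and Q_disc: "\<And>i. i \<in> {1..n} \<Longrightarrow>
                   discrepancy (mset_set (Q i)) (Xs i) M \<le> ereal (eps i)"
    and \<sigma>_inj: "\<And>i. i \<in> {1..n} \<Longrightarrow> inj_on (\<sigma> i) {1..m}"
    and \<sigma>_into: "\<And>i. i \<in> {1..n} \<Longrightarrow> \<sigma> i ` {1..m} \<subseteq> Q i"
    and PR_ne: "PR \<noteq> {#}"
    and PR_pts: "\<And>p. p \<in># PR \<Longrightarrow> p \<in> PiE {1..n} (\<lambda>_. {1..m})"
    and PR_disc: "\<And>I. (\<forall>j\<in>{1..n}. I j \<subseteq> {1..m}) \<Longrightarrow>
        \<bar>real (count_in PR (PiE {1..n} I)) / real (size PR)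
          - (\<Prod>j\<in>{1..n}. real (card (I j)) / real m)\<bar> \<le> epsR"
  shows "discrepancy
           (image_mset (\<lambda>p. restrict (\<lambda>j. \<sigma> j (p j)) {1..n}) PR)
           {PiE {1..n} X | X. \<forall>i\<in>{1..n}. X i \<in> Xs i}
           (PiM {1..n} (\<lambda>_. M))
         \<le> ereal (epsR + (\<Sum>i\<in>{1..n}. eps i))"
proof -
  interpret finite_measure M using fin by (intro finite_measureI) auto
  define U where "U = measure M (space M)"
  have Upos: "U > 0" using pos unfolding U_def by (simp add: emeasure_eq_measure)
  define f where "f = (\<lambda>p::nat\<Rightarrow>nat. restrict (\<lambda>j. \<sigma> j (p j)) {1..n})"
  show ?thesis unfolding discrepancy_def f_def[symmetric]
  proof (rule SUP_least, safe)
    fix X assume X: "\<forall>i\<in>{1..n}. X i \<in> Xs i"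
    have Xm: "X i \<in> sets M" if "i \<in> {1..n}" for i using X Xs_meas[OF that] that by blast
    define I where "I = (\<lambda>j. {a\<in>{1..m}. \<sigma> j a \<in> X j})"
    have c1: "count_in (image_mset f PR) (PiE {1..n} X) = count_in PR (PiE {1..n} I)"
      unfolding count_in_def filter_mset_image_mset size_image_mset
    proof (intro arg_cong[where f=size] filter_mset_cong refl)
      fix p assume "p \<in># PR"
      then have p: "p \<in> PiE {1..n} (\<lambda>_. {1..m})" by (rule PR_pts)
      show "(f p \<in> PiE {1..n} X) = (p \<in> PiE {1..n} I)"
        using p unfolding f_def I_def by (auto simp: PiE_def Pi_def extensional_def)
    qed
    have sz: "size (image_mset f PR) = size PR" by simp
    have sp: "space (PiM {1..n} (\<lambda>_. M)) = PiE {1..n} (\<lambda>_. space M)"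
      by (simp add: space_PiM)
    have mX: "measure (PiM {1..n} (\<lambda>_. M)) (PiE {1..n} X) = (\<Prod>i\<in>{1..n}. measure M (X i))"
      by (rule measure_PiM_box) (auto intro: finite_measure_axioms Xm)
    have mU: "measure (PiM {1..n} (\<lambda>_. M)) (space (PiM {1..n} (\<lambda>_. M))) = (\<Prod>i\<in>{1..n}. U)"
      unfolding sp U_def by (rule measure_PiM_box) (auto intro: finite_measure_axioms)
    define a where "a = (\<lambda>i. measure M (X i) / U)"
    define b where "b = (\<lambda>i. real (card (I i)) / real m)"
    have ratio: "measure (PiM {1..n} (\<lambda>_. M)) (PiE {1..n} X) /
        measure (PiM {1..n} (\<lambda>_. M)) (space (PiM {1..n} (\<lambda>_. M))) = (\<Prod>i\<in>{1..n}. a i)"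
      unfolding mX mU a_def by (simp add: prod_dividef)
    have ab: "\<forall>j\<in>{1..n}. 0 \<le> a j \<and> a j \<le> 1 \<and> 0 \<le> b j \<and> b j \<le> 1"
    proof
      fix j assume j: "j \<in> {1..n}"
      have "measure M (X j) \<le> U" unfolding U_def by (rule bounded_measure)
      moreover have "card (I j) \<le> m"
      proof -
        have "card (I j) \<le> card {1..m}" unfolding I_def by (rule card_mono) auto
        then show ?thesis by simp
      qed
      ultimately show "0 \<le> a j \<and> a j \<le> 1 \<and> 0 \<le> b j \<and> b j \<le> 1"
        using Upos unfolding a_def b_def by (auto simp: divide_le_eq_1)
    qed
    have ebd: "\<bar>b j - a j\<bar> \<le> eps j" if j: "j \<in> {1..n}" for j
    proof -
      have im: "\<sigma> j ` {1..m} = Q j"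
        using card_subset_eq[OF Q_fin[OF j] \<sigma>_into[OF j]] card_image[OF \<sigma>_inj[OF j]] Q_card[OF j]
        by auto
      have "\<sigma> j ` I j = Q j \<inter> X j"
      proof
        show "\<sigma> j ` I j \<subseteq> Q j \<inter> X j" unfolding I_def using im by auto
        show "Q j \<inter> X j \<subseteq> \<sigma> j ` I j"
        proof
          fix x assume x: "x \<in> Q j \<inter> X j"
          then obtain a where "a \<in> {1..m}" "x = \<sigma> j a" using im by blast
          then show "x \<in> \<sigma> j ` I j" using x unfolding I_def by auto
        qed
      qed
      moreover have "inj_on (\<sigma> j) (I j)"
        using \<sigma>_inj[OF j] by (rule inj_on_subset) (auto simp: I_def)
      ultimately have cI: "card (I j) = card (Q j \<inter> X j)" by (metis card_image)
      have "ereal \<bar>real (count_in (mset_set (Q j)) (X j)) / real (size (mset_set (Q j)))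
                        - measure M (X j) / measure M (space M)\<bar> \<le> discrepancy (mset_set (Q j)) (Xs j) M"
        unfolding discrepancy_def using X j by (intro SUP_upper) auto
      also have "\<dots> \<le> eps j" by (rule Q_disc[OF j])
      finally have "\<bar>real (count_in (mset_set (Q j)) (X j)) / real (size (mset_set (Q j)))
                        - measure M (X j) / measure M (space M)\<bar> \<le> eps j" by simp
      moreover have "count_in (mset_set (Q j)) (X j) = card (Q j \<inter> X j)"
        unfolding count_in_def using Q_fin[OF j] by (simp add: Int_def)
      moreover have "size (mset_set (Q j)) = m" using Q_card[OF j] by simp
      ultimately show ?thesis unfolding a_def b_def U_def cI by simp
    qed
    have pd: "\<bar>(\<Prod>j\<in>{1..n}. b j) - (\<Prod>j\<in>{1..n}. a j)\<bar> \<le> (\<Sum>j\<in>{1..n}. eps j)"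
      using prod_diff_le[OF _ ab] sum_mono[of "{1..n}" "\<lambda>j. \<bar>b j - a j\<bar>" eps] ebd
      by (meson finite_atLeastAtMost order_trans)
    have rd: "\<bar>real (count_in PR (PiE {1..n} I)) / real (size PR) - (\<Prod>j\<in>{1..n}. b j)\<bar> \<le> epsR"
      unfolding b_def by (rule PR_disc) (auto simp: I_def)
    have "\<bar>real (count_in (image_mset f PR) (PiE {1..n} X)) / real (size (image_mset f PR))
       - measure (PiM {1..n} (\<lambda>_. M)) (PiE {1..n} X) /
        measure (PiM {1..n} (\<lambda>_. M)) (space (PiM {1..n} (\<lambda>_. M)))\<bar> \<le> epsR + (\<Sum>i\<in>{1..n}. eps i)"
      unfolding c1 sz ratio using pd rd by linarith
    then show "ereal \<bar>real (count_in (image_mset f PR) (PiE {1..n} X)) / real (size (image_mset f PR))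
       - measure (PiM {1..n} (\<lambda>_. M)) (PiE {1..n} X) /
        measure (PiM {1..n} (\<lambda>_. M)) (space (PiM {1..n} (\<lambda>_. M)))\<bar> \<le> ereal (epsR + (\<Sum>i\<in>{1..n}. eps i))"
      by simp
  qed
qed

end
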